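(* Let $S$ be a finite state space, $P$ a row-stochastic $|S|\times|S|$ matrix, $R\in\mathbb{R}^{|S|}$, $\gamma\in(0,1)$, $\beta\in(0,1)$, $d_\mu$ a probability vector on $S$, $f^\top=d_\mu^\top(I-\beta P)^{-1}$ with $f(s)>0$ for all $s$, and $\kappa=\min_s d_\mu(s)/f(s)$. Let $T(V)=R+\gamma PV$, let $V^\pi=(I-\gamma P)^{-1}R$ be its fixed point, let $\Phi$ be an $n\times|S|$ feature matrix (columns $\phi(s)\in\mathbb{R}^n$), and let $\Pi_f$ be the orthogonal projection onto $\{\Phi^\top\theta:\theta\in\mathbb{R}^n\}$ with respect to $\|v\|_f=\sqrt{\sum_s f(s)v(s)^2}$. Assume $\beta>\gamma^2(1-\kappa)$ and let $\theta^*$ satisfy $\Phi^\top\theta^*=\Pi_f T(\Phi^\top\theta^* )$. Then $$\|\Phi^\top\theta^*-V^\pi\|_f\le \frac{1}{\sqrt{1-\frac{\gamma^2}{\beta}(1-\kappa)}}\,\|\Pi_f V^\pi-V^\pi\|_f,$$ $$\|\Phi^\top\theta^*-V^\pi\|_{d_\mu}\le \frac{1}{\sqrt{\gamma\left(1-\frac{\gamma^2}{\beta}(1-\kappa)\right)}}\,\|\Pi_f V^\pi-V^\pi\|_f,$$ where $\|v\|_{d_\mu}=\sqrt{\sum_s d_\mu(s)v(s)^2}$.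
   Context: $P,R$ are the transition matrix and reward vector of the target policy $\pi$ in a finite MDP with discount $\gamma$; $d_\mu$ is the stationary state distribution of the behavior policy; $\theta^*$ is the limit of the ETD(0, $\beta$) algorithm, characterized as a solution of the projected fixed-point equation $V=\Pi_f T V$. *)

theory Defs
  imports "HOL-Analysis.Analysis"
begin

definition winner :: "real^'s \<Rightarrow> real^'s \<Rightarrow> real^'s \<Rightarrow> real" where
  "winner w u v = (\<Sum>s\<in>UNIV. w$s * u$s * v$s)"

definition wnorm :: "real^'s \<Rightarrow> real^'s \<Rightarrow> real" where
  "wnorm w v = sqrt (\<Sum>s\<in>UNIV. w$s * (v$s)^2)"

definition wproj :: "real^'s \<Rightarrow> real^'s^'n \<Rightarrow> real^'s \<Rightarrow> real^'s" where
  "wproj w Phi v = (THE p. p \<in> range (\<lambda>\<theta>. transpose Phi *v \<theta>) \<and>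
      (\<forall>u \<in> range (\<lambda>\<theta>. transpose Phi *v \<theta>). winner w (v - p) u = 0))"

definition row_stochastic :: "real^'s^'s \<Rightarrow> bool" where
  "row_stochastic P \<longleftrightarrow> (\<forall>i j. P$i$j \<ge> 0) \<and> (\<forall>i. (\<Sum>j\<in>UNIV. P$i$j) = 1)"

definition prob_vector :: "real^'s \<Rightarrow> bool" where
  "prob_vector d \<longleftrightarrow> (\<forall>s. d$s \<ge> 0) \<and> (\<Sum>s\<in>UNIV. d$s) = 1"

end

theory Submission
  imports Defs
begin

lemma mv_comp: "((A::real^'n^'m) *v x)$i = (\<Sum>j\<in>UNIV. A$i$j * x$j)"
  by (simp add: matrix_vector_mult_def)

lemma vm_comp: "(x v* (A::real^'n^'m))$j = (\<Sum>i\<in>UNIV. x$i * A$i$j)"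
  by (simp add: vector_matrix_mult_def)

lemma stoch_inj:
  fixes P :: "real^'s^'s"
  assumes P: "row_stochastic P" and c: "0 < c" "c < 1"
    and x: "x = c *\<^sub>R (P *v x)"
  shows "x = 0"
proof -
  define M where "M = Max (range (\<lambda>i. \<bar>x$i\<bar>))"
  have fin: "finite (range (\<lambda>i. \<bar>x$i\<bar>))" by simp
  have leM: "\<bar>x$i\<bar> \<le> M" for i unfolding M_def by (rule Max_ge[OF fin]) auto
  have "\<bar>x$i\<bar> \<le> c * M" for i
  proof -
    have "x$i = c * (\<Sum>j\<in>UNIV. P$i$j * x$j)"
      using arg_cong[OF x, of "\<lambda>v. v$i"] by (simp add: mv_comp)
    hence e1: "\<bar>x$i\<bar> = c * \<bar>\<Sum>j\<in>UNIV. P$i$j * x$j\<bar>" using c by (simp add: abs_mult)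
    have "\<bar>\<Sum>j\<in>UNIV. P$i$j * x$j\<bar> \<le> (\<Sum>j\<in>UNIV. P$i$j * \<bar>x$j\<bar>)"
      using P unfolding row_stochastic_def
      by (intro order_trans[OF sum_abs] eq_imp_le sum.cong) (auto simp: abs_mult)
    also have "\<dots> \<le> (\<Sum>j\<in>UNIV. P$i$j * M)"
      using P unfolding row_stochastic_def by (intro sum_mono mult_left_mono leM) auto
    also have "\<dots> = M" using P unfolding row_stochastic_def by (simp add: sum_distrib_right[symmetric])
    finally have "\<bar>\<Sum>j\<in>UNIV. P$i$j * x$j\<bar> \<le> M" .
    thus ?thesis unfolding e1 using c by (simp add: mult_left_mono)
  qed
  hence "M \<le> c * M" unfolding M_def by (intro Max.boundedI) auto
  moreover have "0 \<le> M" using leM[of undefined] by linarith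
  ultimately have "(1 - c) * M \<le> 0" by (simp add: algebra_simps)
  hence "M \<le> 0" using c by (simp add: mult_le_0_iff)
  thus ?thesis using leM by (simp add: vec_eq_iff) (meson abs_le_zero_iff order_trans)
qed

lemma stoch_invertible:
  fixes P :: "real^'s^'s"
  assumes P: "row_stochastic P" and c: "0 < c" "c < 1"
  shows "invertible (mat 1 - c *\<^sub>R P)"
  unfolding invertible_left_inverse matrix_left_invertible_ker
proof (intro allI impI)
  fix x :: "real^'s" assume "(mat 1 - c *\<^sub>R P) *v x = 0"
  hence "x - c *\<^sub>R (P *v x) = 0"
    by (simp add: matrix_vector_mult_diff_rdistrib scaleR_matrix_vector_assoc)
  thus "x = 0" using stoch_inj[OF P c] by simp
qed

lemma matrix_inv_props:
  assumes "invertible (A::real^'n^'n)"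
  shows "A ** matrix_inv A = mat 1 \<and> matrix_inv A ** A = mat 1"
  using assms unfolding invertible_def matrix_inv_def by (rule someI_ex)

definition sc :: "real^'s \<Rightarrow> real^'s \<Rightarrow> real^'s" where
  "sc f u = (\<chi> s. sqrt (f$s) * u$s)"

lemma sc_diff[simp]: "sc f (u - v) = sc f u - sc f v"
  by (simp add: sc_def vec_eq_iff algebra_simps)
lemma sc_add[simp]: "sc f (u + v) = sc f u + sc f v"
  by (simp add: sc_def vec_eq_iff algebra_simps)
lemma sc_scaleR[simp]: "sc f (c *\<^sub>R v) = c *\<^sub>R sc f v"
  by (simp add: sc_def vec_eq_iff algebra_simps)

lemma winner_sc:
  assumes "\<forall>s. f$s > 0"
  shows "winner f u v = inner (sc f u) (sc f v)"
proof -
  have h: "\<And>s. f$s * u$s * v$s = sqrt (f$s) * u$s * (sqrt (f$s) * v$s)"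
  proof -
    fix s have "sqrt (f$s) * sqrt (f$s) = f$s" using assms by (simp add: less_imp_le)
    thus "f$s * u$s * v$s = sqrt (f$s) * u$s * (sqrt (f$s) * v$s)" by (metis mult.assoc mult.commute)
  qed
  show ?thesis unfolding winner_def sc_def inner_vec_def
    by (simp only: vec_lambda_beta inner_real_def) (rule sum.cong[OF refl h])
qed

lemma wnorm_sc:
  assumes "\<forall>s. f$s > 0"
  shows "wnorm f u = norm (sc f u)"
proof -
  have "wnorm f u = sqrt (winner f u u)"
    unfolding wnorm_def winner_def by (simp add: power2_eq_square mult.assoc)
  thus ?thesis using winner_sc[OF assms] by (simp add: norm_eq_sqrt_inner)
qed

lemma sc_inj:
  assumes "\<forall>s. f$s > 0" "sc f u = 0"
  shows "u = 0"
  using assms by (simp add: sc_def vec_eq_iff) (metis less_irrefl)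

lemma wproj_char:
  fixes Phi :: "real^'s^'n"
  assumes fpos: "\<forall>s. f$s > 0"
  shows "wproj f Phi v \<in> range (\<lambda>\<theta>. transpose Phi *v \<theta>) \<and>
    (\<forall>u \<in> range (\<lambda>\<theta>. transpose Phi *v \<theta>). winner f (v - wproj f Phi v) u = 0)"
proof -
  let ?W = "range (\<lambda>\<theta>. transpose Phi *v \<theta>)"
  define g where "g = (\<lambda>\<theta>. sc f (transpose Phi *v \<theta>))"
  have lin: "linear g" unfolding g_def
    by (intro linearI) (simp_all add: matrix_vector_right_distrib matrix_vector_mult_scaleR)
  have sub: "subspace (range g)" by (rule linear_subspace_image[OF lin subspace_UNIV])
  obtain y z where y: "y \<in> span (range g)" and z: "\<And>w. w \<in> span (range g) \<Longrightarrow> orthogonal z w"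
    and yz: "sc f v = y + z"
    using orthogonal_subspace_decomp_exists by blast
  have sp: "span (range g) = range g" using sub by (simp add: span_eq_iff)
  obtain t0 where t0: "y = g t0" using y sp by auto
  define p where "p = transpose Phi *v t0"
  have ex: "p \<in> ?W \<and> (\<forall>u \<in> ?W. winner f (v - p) u = 0)"
  proof (intro conjI ballI)
    show "p \<in> ?W" unfolding p_def by auto
    fix u assume "u \<in> ?W"
    then obtain t where u: "u = transpose Phi *v t" by auto
    have "winner f (v - p) u = inner z (g t)"
      using winner_sc[OF fpos] yz t0 by (simp add: p_def u g_def)
    also have "\<dots> = 0" using z[of "g t"] sp by (auto simp: orthogonal_def)
    finally show "winner f (v - p) u = 0" .
  qed
  have uniq: "q = p" if q: "q \<in> ?W \<and> (\<forall>u \<in> ?W. winner f (v - q) u = 0)" for q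
  proof -
    obtain tq where tq: "q = transpose Phi *v tq" using q by auto
    have dW: "q - p \<in> ?W"
      by (rule range_eqI[of _ _ "tq - t0"]) (simp add: tq p_def matrix_vector_mult_diff_distrib)
    have "winner f (v - q) (q - p) = 0" "winner f (v - p) (q - p) = 0" using q ex dW by auto
    hence "inner (sc f (q - p)) (sc f (q - p)) = 0"
      using winner_sc[OF fpos] by (simp add: inner_diff_left inner_diff_right)
    hence "sc f (q - p) = 0" by simp
    thus ?thesis using sc_inj[OF fpos, of "q - p"] by simp
  qed
  have "wproj f Phi v = p" unfolding wproj_def
    by (rule the_equality) (use ex uniq in blast)+
  thus ?thesis using ex by simp
qed

lemma jensen_row:
  fixes P :: "real^'s^'s"
  assumes P: "row_stochastic P"
  shows "(\<Sum>j\<in>UNIV. P$i$j * v$j)^2 \<le> (\<Sum>j\<in>UNIV. P$i$j * (v$j)^2)"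
proof -
  define m where "m = (\<Sum>j\<in>UNIV. P$i$j * v$j)"
  have s1: "(\<Sum>j\<in>UNIV. P$i$j) = 1" using P unfolding row_stochastic_def by auto
  have "0 \<le> (\<Sum>j\<in>UNIV. P$i$j * (v$j - m)^2)"
    using P unfolding row_stochastic_def by (intro sum_nonneg) auto
  also have "\<dots> = (\<Sum>j\<in>UNIV. P$i$j * (v$j)^2) - 2 * m * (\<Sum>j\<in>UNIV. P$i$j * v$j) + m^2 * (\<Sum>j\<in>UNIV. P$i$j)"
    by (simp add: power2_eq_square algebra_simps sum.distrib sum_subtractf sum_distrib_left sum_distrib_right)
  also have "\<dots> = (\<Sum>j\<in>UNIV. P$i$j * (v$j)^2) - m^2"
    using s1 by (simp add: m_def power2_eq_square)
  finally show ?thesis unfolding m_def by simp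
qed

lemma contraction:
  fixes P :: "real^'s^'s"
  assumes P: "row_stochastic P" and fpos: "\<forall>s. f$s > 0"
    and K: "\<And>j. (\<Sum>i\<in>UNIV. f$i * P$i$j) \<le> K * f$j"
  shows "(wnorm f (P *v v))^2 \<le> K * (wnorm f v)^2"
proof -
  have sq: "(wnorm f u)^2 = (\<Sum>s\<in>UNIV. f$s * (u$s)^2)" for u
    unfolding wnorm_def using fpos by (intro real_sqrt_pow2 sum_nonneg) (simp add: less_imp_le)
  have "(\<Sum>i\<in>UNIV. f$i * ((P *v v)$i)^2) \<le> (\<Sum>i\<in>UNIV. f$i * (\<Sum>j\<in>UNIV. P$i$j * (v$j)^2))"
    unfolding mv_comp using fpos jensen_row[OF P] by (intro sum_mono mult_left_mono) (auto simp: less_imp_le)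
  also have "\<dots> = (\<Sum>j\<in>UNIV. (\<Sum>i\<in>UNIV. f$i * P$i$j) * (v$j)^2)"
    by (simp add: sum_distrib_left sum_distrib_right mult.assoc) (rule sum.swap)
  also have "\<dots> \<le> (\<Sum>j\<in>UNIV. K * f$j * (v$j)^2)"
    using K by (intro sum_mono mult_right_mono) auto
  also have "\<dots> = K * (\<Sum>j\<in>UNIV. f$j * (v$j)^2)" by (simp add: sum_distrib_left mult.assoc)
  finally show ?thesis unfolding sq .
qed
lemma vm_mat_comp:
  fixes P :: "real^'s^'s"
  shows "(f v* (mat 1 - c *\<^sub>R P))$j = f$j - c * (\<Sum>i\<in>UNIV. f$i * P$i$j)"
proof -
  have "(f v* (mat 1 - c *\<^sub>R P))$j = (\<Sum>i\<in>UNIV. f$i * (if i = j then 1 else 0) - c * (f$i * P$i$j))"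
    unfolding vm_comp by (intro sum.cong) (auto simp: mat_def algebra_simps)
  also have "\<dots> = f$j - c * (\<Sum>i\<in>UNIV. f$i * P$i$j)"
    by (simp add: sum_subtractf sum_distrib_left if_distrib[of "\<lambda>t. _ * t"] cong: if_cong)
  finally show ?thesis .
qed

theorem corollary1:
  fixes P :: "real^'s^'s" and R d :: "real^'s" and \<gamma> \<beta> :: real
    and Phi :: "real^'s^'n" and \<theta>star :: "real^'n"
    and f :: "real^'s" and \<kappa> :: real and T :: "real^'s \<Rightarrow> real^'s" and V\<pi> :: "real^'s"
  assumes P: "row_stochastic P"
    and gamma: "0 < \<gamma>" "\<gamma> < 1"
    and beta: "0 < \<beta>" "\<beta> < 1"
    and d: "prob_vector d"
    and f_def: "f = d v* matrix_inv (mat 1 - \<beta> *\<^sub>R P)"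
    and f_pos: "\<forall>s. f$s > 0"
    and kappa_def: "\<kappa> = Min (range (\<lambda>s. d$s / f$s))"
    and T_def: "T = (\<lambda>V. R + \<gamma> *\<^sub>R (P *v V))"
    and Vpi_def: "V\<pi> = matrix_inv (mat 1 - \<gamma> *\<^sub>R P) *v R"
    and cond: "\<beta> > \<gamma>^2 * (1 - \<kappa>)"
    and fixpt: "transpose Phi *v \<theta>star = wproj f Phi (T (transpose Phi *v \<theta>star))"
  shows "(wnorm f (transpose Phi *v \<theta>star - V\<pi>)
           \<le> 1 / sqrt (1 - \<gamma>^2 / \<beta> * (1 - \<kappa>)) * wnorm f (wproj f Phi V\<pi> - V\<pi>)) \<and>
         (wnorm d (transpose Phi *v \<theta>star - V\<pi>)
           \<le> 1 / sqrt (\<gamma> * (1 - \<gamma>^2 / \<beta> * (1 - \<kappa>))) * wnorm f (wproj f Phi V\<pi> - V\<pi>))"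
proof -
  let ?W = "range (\<lambda>\<theta>. transpose Phi *v \<theta>)"
  define x where "x = transpose Phi *v \<theta>star"
  define p where "p = wproj f Phi V\<pi>"
  define y where "y = T x"
  have fge: "\<forall>s. f$s \<ge> 0" using f_pos by (simp add: less_imp_le)
  note ws = winner_sc[OF f_pos] and wn = wnorm_sc[OF f_pos]
  have invg: "invertible (mat 1 - \<gamma> *\<^sub>R P)" using stoch_invertible[OF P gamma] .
  have "(mat 1 - \<gamma> *\<^sub>R P) *v V\<pi> = R"
    using matrix_inv_props[OF invg] unfolding Vpi_def
    by (simp add: matrix_vector_mul_assoc)
  hence "V\<pi> - \<gamma> *\<^sub>R (P *v V\<pi>) = R"
    by (simp add: matrix_vector_mult_diff_rdistrib scaleR_matrix_vector_assoc[symmetric])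
  hence TV: "T V\<pi> = V\<pi>"
    unfolding T_def by (metis diff_add_cancel)
  have invb: "invertible (mat 1 - \<beta> *\<^sub>R P)" using stoch_invertible[OF P beta] .
  have "f v* (mat 1 - \<beta> *\<^sub>R P) = d"
    using matrix_inv_props[OF invb] unfolding f_def
    by (simp add: vector_matrix_mul_assoc)
  hence fd: "d$j = f$j - \<beta> * (\<Sum>i\<in>UNIV. f$i * P$i$j)" for j
    using vm_mat_comp[of f \<beta> P j] by simp
  have kap: "\<kappa> * f$j \<le> d$j" for j
  proof -
    have "\<kappa> \<le> d$j / f$j" unfolding kappa_def by (rule Min_le) auto
    thus ?thesis using f_pos by (simp add: pos_le_divide_eq)
  qed
  have Kb: "(\<Sum>i\<in>UNIV. f$i * P$i$j) \<le> ((1 - \<kappa>) / \<beta>) * f$j" for j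
    using fd[of j] kap[of j] beta by (simp add: field_simps)
  have dlef: "d$j \<le> f$j" for j
  proof -
    have "0 \<le> (\<Sum>i\<in>UNIV. f$i * P$i$j)" using P fge unfolding row_stochastic_def
      by (intro sum_nonneg) auto
    hence "0 \<le> \<beta> * (\<Sum>i\<in>UNIV. f$i * P$i$j)" using beta by simp
    thus ?thesis using fd[of j] by linarith
  qed
  have xW: "x \<in> ?W" unfolding x_def by auto
  have x_proj: "\<forall>u\<in>?W. winner f (y - x) u = 0"
    using wproj_char[OF f_pos, of Phi y] fixpt unfolding x_def y_def by simp
  have pW: "p \<in> ?W" and p_proj: "\<forall>u\<in>?W. winner f (V\<pi> - p) u = 0"
    using wproj_char[OF f_pos, of Phi V\<pi>] unfolding p_def by auto
  have xpW: "x - p \<in> ?W"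
  proof -
    obtain t where "p = transpose Phi *v t" using pW by auto
    thus ?thesis unfolding x_def by (metis matrix_vector_mult_diff_distrib rangeI)
  qed
  define a where "a = sc f (x - V\<pi>)"
  define e where "e = sc f (x - p)"
  define b where "b = sc f (p - V\<pi>)"
  define g where "g = sc f (\<gamma> *\<^sub>R (P *v (x - V\<pi>)))"
  define q where "q = \<gamma>^2 / \<beta> * (1 - \<kappa>)"
  have ab: "a = e + b" unfolding a_def e_def b_def by simp
  have h: "inner (sc f (V\<pi> - p)) (sc f (x - p)) = 0" using p_proj xpW unfolding ws by blast
  have "b = - sc f (V\<pi> - p)" unfolding b_def by simp
  hence eb: "inner e b = 0" using h unfolding e_def by (simp only: inner_minus_right inner_commute)
  have pyth: "(norm a)^2 = (norm e)^2 + (norm b)^2"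
    unfolding ab by (rule norm_add_Pythagorean) (simp add: orthogonal_def eb)
  have yV: "y - V\<pi> = \<gamma> *\<^sub>R (P *v (x - V\<pi>))"
  proof -
    have "y - V\<pi> = T x - T V\<pi>" using TV by (simp add: y_def)
    also have "\<dots> = \<gamma> *\<^sub>R (P *v x - P *v V\<pi>)" unfolding T_def by (simp add: scaleR_diff_right)
    also have "\<dots> = \<gamma> *\<^sub>R (P *v (x - V\<pi>))" by (simp add: matrix_vector_mult_diff_distrib)
    finally show ?thesis .
  qed
  have "inner e e = inner g e"
  proof -
    have "inner e e = inner (sc f (y - V\<pi>)) e"
    proof -
    have "inner (sc f (y - x)) e = 0" using x_proj xpW unfolding ws e_def by blast
    moreover have "inner (sc f (V\<pi> - p)) e = 0" using p_proj xpW unfolding ws e_def by blast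
    moreover have "e = (sc f (y - V\<pi>) + sc f (V\<pi> - p)) - sc f (y - x)"
      unfolding e_def by simp
    ultimately show "inner e e = inner (sc f (y - V\<pi>)) e"
      proof -
      assume h1: "inner (sc f (y - x)) e = 0" and h2: "inner (sc f (V\<pi> - p)) e = 0"
        and h3: "e = (sc f (y - V\<pi>) + sc f (V\<pi> - p)) - sc f (y - x)"
      have "inner e e = inner ((sc f (y - V\<pi>) + sc f (V\<pi> - p)) - sc f (y - x)) e"
        by (simp only: h3)
      also have "\<dots> = inner (sc f (y - V\<pi>)) e + inner (sc f (V\<pi> - p)) e - inner (sc f (y - x)) e"
        by (simp only: inner_diff_left inner_add_left)
      finally show ?thesis using h1 h2 by simp
    qed
    qed
    thus ?thesis unfolding g_def yV .
  qed
  also have "\<dots> \<le> norm g * norm e" by (rule norm_cauchy_schwarz)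
  finally have en: "(norm e)^2 \<le> norm g * norm e" by (simp add: power2_norm_eq_inner)
  have ege: "norm e \<le> norm g"
  proof (cases "norm e = 0")
    case False
    hence "0 < norm e" by simp
    with en show ?thesis by (simp add: power2_eq_square mult_right_le_imp_le)
  qed simp
  have "(norm g)^2 = \<gamma>^2 * (wnorm f (P *v (x - V\<pi>)))^2"
    unfolding g_def wn using gamma by (simp add: power_mult_distrib)
  also have "\<dots> \<le> \<gamma>^2 * (((1 - \<kappa>) / \<beta>) * (wnorm f (x - V\<pi>))^2)"
    by (intro mult_left_mono contraction[OF P f_pos Kb]) auto
  also have "\<dots> = q * (norm a)^2" unfolding q_def a_def wn by simp
  finally have gq: "(norm g)^2 \<le> q * (norm a)^2" .
  have e2: "(norm e)^2 \<le> (norm g)^2" using ege by (simp add: power_mono)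
  have "(norm a)^2 \<le> q * (norm a)^2 + (norm b)^2" using pyth gq e2 by linarith
  hence main: "(norm a)^2 * (1 - q) \<le> (norm b)^2" by (simp add: algebra_simps)
  have q1: "0 < 1 - q" using cond beta unfolding q_def by (simp add: field_simps)
  have A1: "norm a \<le> 1 / sqrt (1 - q) * norm b"
  proof -
    have "(norm a)^2 \<le> (norm b)^2 / (1 - q)" using main q1 by (simp add: pos_le_divide_eq)
    hence "norm a \<le> sqrt ((norm b)^2 / (1 - q))" by (simp add: real_le_rsqrt)
    also have "\<dots> = 1 / sqrt (1 - q) * norm b" by (simp add: real_sqrt_divide)
    finally show ?thesis .
  qed
  have first: "wnorm f (x - V\<pi>) \<le> 1 / sqrt (1 - q) * wnorm f (p - V\<pi>)"
    using A1 unfolding a_def b_def wn .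
  have dle: "wnorm d (x - V\<pi>) \<le> wnorm f (x - V\<pi>)"
    unfolding wnorm_def using d dlef unfolding prob_vector_def
    by (intro real_sqrt_le_mono sum_mono mult_right_mono) auto
  have "1 / sqrt (1 - q) \<le> 1 / sqrt (\<gamma> * (1 - q))"
    using q1 gamma by (intro divide_left_mono real_sqrt_le_mono) (auto simp: mult_pos_pos)
  hence "1 / sqrt (1 - q) * wnorm f (p - V\<pi>) \<le> 1 / sqrt (\<gamma> * (1 - q)) * wnorm f (p - V\<pi>)"
    by (intro mult_right_mono) (simp_all add: wn)
  hence second: "wnorm d (x - V\<pi>) \<le> 1 / sqrt (\<gamma> * (1 - q)) * wnorm f (p - V\<pi>)"
    using first dle by linarith
  show ?thesis using first second unfolding x_def p_def q_def by (rule conjI)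
qed

end
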